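(* Let $\Delta x>0$, grid $x_j=x_1+(j-1)\Delta x$, $M_-,M_+\in\mathbb{Z}$ with $M:=M_-+M_+\ge0$, and let $f,h$ be real functions of class $C^{N_{TJ}+1}$ forming a reconstruction pair, $f(x)=\frac{1}{\Delta x}\int_{x-\frac12\Delta x}^{x+\frac12\Delta x}h(\zeta)\,d\zeta$, on an interval containing the relevant points. Let $p_f$ be the polynomial of degree $\le M$ interpolating $f$ at $x_{i-M_-},\dots,x_{i+M_+}$ and $p_h$ the polynomial of degree $\le M$ with $p_f(x)=\frac1{\Delta x}\int_{x-\frac12\Delta x}^{x+\frac12\Delta x}p_h$ for all $x$. Let $x_{i+\frac12}=x_i+\tfrac12\Delta x$, $h_{i+\frac12}^{(m)}=h^{(m)}(x_{i+\frac12})$, $f_{i+\ell}=f(x_{i+\ell})$. Then, for $N_{TJ}\ge M+1$, $$\hat h_{i+\frac12}:=p_h(x_{i+\frac12})=\sum_{\ell=-M_-}^{M_+}a_{M_-,M_+,\ell}\,f_{i+\ell}=h_{i+\frac12}+\sum_{s=M+1}^{N_{TJ}}\Lambda_{M_-,M_+,s}\Delta x^s h^{(s)}_{i+\frac12}+O(\Delta x^{N_{TJ}+1}),$$ and the error term is $O(\Delta x^{M+1})$, where $$\Lambda_{M_-,M_+,s}=\sum_{\ell=0}^{s-M-1}\frac{(-1)^\ell}{(\ell+1)!}\mu_{h,M_-,M_+,s-\ell}(\tfrac12),\qquad a_{M_-,M_+,\ell}=\sum_{m=0}^{M}\left(\sum_{k=0}^{\lfloor (M-m)/2\rfloor}\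frac{\tau_{2k}(m+2k)!}{m!}(V_{M_-,M_+}^{-1})_{m+2k+1,\ell+M_-+1}\right)2^{-m}.$$
   Context: $O(\cdot)$ refers to $\Delta x\to0^+$. $V_{M_-,M_+}$ is the Vandermonde matrix with entries $(i-1-M_-)^{j-1}$, $1\le i,j\le M+1$ (with $0^0=1$); $\nu_{M_-,M_+,m,k}:=\sum_{\ell=-M_-}^{M_+}(V_{M_-,M_+}^{-1})_{m+1,\ell+M_-+1}\ell^k$; $\tau_0=1$, $\tau_{2k}=\sum_{s=0}^{k-1}\frac{-\tau_{2s}}{2^{2k-2s}(2k-2s+1)!}$ for $k>0$; $\mu_{h,M_-,M_+,s}(\xi)=\sum_{k=0}^{\lfloor s/2\rfloor}\frac{-\tau_{2k}}{(s-2k)!}\xi^{s-2k}+\sum_{m=0}^{M}\Big(\sum_{k=0}^{\lfloor (M-m)/2\rfloor}\tau_{2k}\nu_{M_-,M_+,m+2k,s}\frac{(m+2k)!}{s!\,m!}\Big)\xi^m$. *)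

theory Defs
  imports "HOL-Analysis.Analysis" "HOL-Library.Landau_Symbols"
    "Jordan_Normal_Form.Gauss_Jordan_Elimination"
begin

definition Mdeg :: "int \<Rightarrow> int \<Rightarrow> nat" where
  "Mdeg Mm Mp = nat (Mm + Mp)"

(* Vandermonde matrix V_{M_-,M_+}, 0-based: entry (i,j) = (i - M_-)^j, 0^0 = 1 *)
definition vander :: "int \<Rightarrow> int \<Rightarrow> real mat" where
  "vander Mm Mp = mat (Mdeg Mm Mp + 1) (Mdeg Mm Mp + 1)
      (\<lambda>(i, j). (real_of_int (int i - Mm)) ^ j)"

(* its inverse (the Vandermonde matrix has distinct nodes, hence is invertible) *)
definition vander_inv :: "int \<Rightarrow> int \<Rightarrow> real mat" where
  "vander_inv Mm Mp = the (mat_inverse (vander Mm Mp))"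

(* 0-based access: Vinv_{m+1, l+M_-+1} in the paper = vinv Mm Mp m l *)
definition vinv :: "int \<Rightarrow> int \<Rightarrow> nat \<Rightarrow> int \<Rightarrow> real" where
  "vinv Mm Mp m l = vander_inv Mm Mp $$ (m, nat (l + Mm))"

definition nu :: "int \<Rightarrow> int \<Rightarrow> nat \<Rightarrow> nat \<Rightarrow> real" where
  "nu Mm Mp m k = (\<Sum>l = -Mm..Mp. vinv Mm Mp m l * (real_of_int l) ^ k)"

(* tau k = \<tau>_{2k} *)
fun tau :: "nat \<Rightarrow> real" where
  "tau 0 = 1"
| "tau (Suc k) = (\<Sum>s<Suc k. - tau s /
      (2 ^ (2 * Suc k - 2 * s) * fact (2 * Suc k - 2 * s + 1)))"

definition mu :: "int \<Rightarrow> int \<Rightarrow> nat \<Rightarrow> real \<Rightarrow> real" where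
  "mu Mm Mp s \<xi> =
     (\<Sum>k = 0..s div 2. - tau k / fact (s - 2 * k) * \<xi> ^ (s - 2 * k))
   + (\<Sum>m = 0..Mdeg Mm Mp.
        (\<Sum>k = 0..(Mdeg Mm Mp - m) div 2.
           tau k * nu Mm Mp (m + 2 * k) s * fact (m + 2 * k) / (fact s * fact m)) * \<xi> ^ m)"

definition Lambda :: "int \<Rightarrow> int \<Rightarrow> nat \<Rightarrow> real" where
  "Lambda Mm Mp s = (\<Sum>l = 0..s - Mdeg Mm Mp - 1.
       (-1) ^ l / fact (l + 1) * mu Mm Mp (s - l) (1 / 2))"

definition acoef :: "int \<Rightarrow> int \<Rightarrow> int \<Rightarrow> real" where
  "acoef Mm Mp l = (\<Sum>m = 0..Mdeg Mm Mp.
      (\<Sum>k = 0..(Mdeg Mm Mp - m) div 2.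
         tau k * fact (m + 2 * k) / fact m * vinv Mm Mp (m + 2 * k) l) * (1 / 2) ^ m)"

definition cell_avg :: "real \<Rightarrow> (real \<Rightarrow> real) \<Rightarrow> real \<Rightarrow> real" where
  "cell_avg dx h x = (1 / dx) * integral {x - dx / 2 .. x + dx / 2} h"

end

theory Submission
  imports Defs "HOL-Computational_Algebra.Formal_Power_Series" "Jordan_Normal_Form.Determinant"
begin

lemma even_sum: "(\<Sum>i=0..(n::nat). if even i then g (i div 2) else (0::real)) = (\<Sum>k=0..n div 2. g k)"
proof (induction n)
  case 0 then show ?case by simp
next
  case (Suc n)
  show ?case
  proof (cases "even (Suc n)")
    case True
    then have "Suc n div 2 = Suc (n div 2)" by presburger
    then show ?thesis using Suc True by simp
  next
    case False
    then have "Suc n div 2 = n div 2" by presburger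
    then show ?thesis using Suc False by simp
  qed
qed

definition Gs :: "nat \<Rightarrow> real" where
  "Gs r = (\<Sum>k=0..r div 2. tau k * (1/2)^(r-2*k) / fact (r-2*k))"

definition Tf :: "real fps" where "Tf = Abs_fps (\<lambda>n. if even n then tau (n div 2) else 0)"
definition Sf :: "real fps" where "Sf = Abs_fps (\<lambda>n. if even n then 1/(2^n * fact (n+1)) else 0)"
definition Df :: "real fps" where "Df = Abs_fps (\<lambda>n. (-1)^n / fact (n+1))"

lemma TS: "Tf * Sf = 1"
proof (rule fps_ext)
  fix n
  show "fps_nth (Tf * Sf) n = fps_nth 1 n"
  proof (cases "even n")
    case False
    have "fps_nth (Tf * Sf) n = (\<Sum>i=0..n. fps_nth Tf i * fps_nth Sf (n - i))" by (simp add: fps_mult_nth)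
    also have "\<dots> = 0"
      by (rule sum.neutral) (use False in \<open>auto simp: Tf_def Sf_def\<close>)
    finally show ?thesis using False by (simp add: odd_pos)
  next
    case True
    then obtain k where n: "n = 2*k" by blast
    have "fps_nth (Tf * Sf) n = (\<Sum>i=0..n. fps_nth Tf i * fps_nth Sf (n - i))" by (simp add: fps_mult_nth)
    also have "\<dots> = (\<Sum>i=0..n. if even i then tau (i div 2) / (2^(n - 2*(i div 2)) * fact (n - 2*(i div 2)+1)) else 0)"
      by (rule sum.cong) (auto simp: Tf_def Sf_def n elim!: evenE)
    also have "\<dots> = (\<Sum>j=0..k. tau j / (2^(n - 2*j) * fact (n - 2*j+1)))"
      by (subst even_sum) (simp add: n)
    also have "\<dots> = fps_nth 1 n"
    proof (cases k)
      case 0 then show ?thesis using n by simp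
    next
      case (Suc k')
      have "(\<Sum>j=0..k. tau j / (2^(n - 2*j) * fact (n - 2*j+1)))
          = tau (Suc k') + (\<Sum>j<Suc k'. tau j / (2^(2*Suc k' - 2*j) * fact (2*Suc k' - 2*j+1)))"
        using Suc n by (simp add: atLeast0AtMost lessThan_Suc_atMost[symmetric] sum.lessThan_Suc)
      also have "\<dots> = 0"
        by (simp only: tau.simps(2) sum.distrib[symmetric]) simp
      finally show ?thesis using Suc n by simp
    qed
    finally show ?thesis .
  qed
qed

lemma XS: "fps_X * Sf = fps_exp (1/2) - fps_exp (-1/2)"
proof (rule fps_ext)
  fix n
  show "fps_nth (fps_X * Sf) n = fps_nth (fps_exp (1/2) - fps_exp (-1/2)) n"
  proof (cases n)
    case 0 then show ?thesis by (simp add: fps_X_mult_nth)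
  next
    case (Suc m)
    show ?thesis
    proof (cases "even m")
      case True
      have e: "((-1/2::real))^(Suc m) = - ((1/2)^Suc m)" using True
        by (simp add: power_minus_odd)
      have l: "fps_nth (fps_X * Sf) n = 1/(2^m * fact (Suc m))" using True Suc
        by (simp add: fps_X_mult_nth Sf_def)
      have r: "fps_nth (fps_exp (1/2) - fps_exp (-1/2)) n = (1/2)^Suc m/fact (Suc m) - (-1/2::real)^Suc m/fact (Suc m)"
        using Suc by (simp only: fps_sub_nth fps_exp_nth of_nat_fact)
      have q: "((1/2)^Suc m - (-1/2::real)^Suc m) = 1/2^m" unfolding e by (simp add: power_divide)
      have "(1/2::real)^Suc m/fact (Suc m) - (-1/2::real)^Suc m/fact (Suc m) = ((1/2)^Suc m - (-1/2::real)^Suc m)/fact (Suc m)"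
        by (rule diff_divide_distrib[symmetric])
      also have "\<dots> = 1/(2^m * fact (Suc m))" unfolding q by simp
      finally show ?thesis using l r by simp
    next
      case False
      have "((-1/2::real))^(Suc m) = ((1/2)^Suc m)" using False
        by (simp add: power_minus_even)
      then show ?thesis using False Suc
        by (simp add: fps_X_mult_nth Sf_def fps_exp_def)
    qed
  qed
qed

lemma XD: "fps_X * Df = 1 - fps_exp (-1)"
proof (rule fps_ext)
  fix n
  show "fps_nth (fps_X * Df) n = fps_nth (1 - fps_exp (-1)) n"
    by (cases n) (simp_all add: fps_X_mult_nth Df_def fps_exp_def)
qed

lemma TE: "fps_nth (Tf * fps_exp (1/2)) r = Gs r"
proof -
  have "fps_nth (Tf * fps_exp (1/2)) r = (\<Sum>i=0..r. fps_nth Tf i * fps_nth (fps_exp (1/2)) (r - i))" by (simp add: fps_mult_nth)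
  also have "\<dots> = (\<Sum>i=0..r. if even i then tau (i div 2) * (1/2)^(r - 2*(i div 2)) / fact (r - 2*(i div 2)) else 0)"
    by (rule sum.cong) (auto simp: Tf_def fps_exp_def elim!: evenE)
  also have "\<dots> = Gs r" by (subst even_sum) (simp add: Gs_def)
  finally show ?thesis .
qed

lemma DG: "Df * (Tf * fps_exp (1/2)) = 1"
proof -
  have "fps_X * (Df * (Tf * fps_exp (1/2))) = (1 - fps_exp (-1)) * fps_exp (1/2) * Tf"
    by (simp add: XD[symmetric] ac_simps)
  also have "\<dots> = (fps_exp (1/2) - fps_exp (-1/2)) * Tf"
    by (simp add: algebra_simps fps_exp_add_mult[symmetric])
  also have "\<dots> = (fps_X * Sf) * Tf" by (simp only: XS)
  also have "\<dots> = fps_X * (Tf * Sf)" by (simp add: ac_simps)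
  also have "\<dots> = fps_X * 1" by (simp add: TS)
  finally show ?thesis by (simp add: fps_X_neq_zero)
qed

lemma DG_sum: "(\<Sum>i=0..s. (-1)^i / fact (i+1) * Gs (s - i)) = (if s = 0 then 1 else (0::real))"
proof -
  have "fps_nth (Df * (Tf * fps_exp (1/2))) s = (\<Sum>i=0..s. fps_nth Df i * fps_nth (Tf * fps_exp (1/2)) (s - i))"
    by (simp add: fps_mult_nth)
  then show ?thesis using DG by (simp add: TE Df_def)
qed
lemma vander_carrier: "vander Mm Mp \<in> carrier_mat (Mdeg Mm Mp + 1) (Mdeg Mm Mp + 1)"
  by (simp add: vander_def)

lemma vander_det:
  assumes "Mm + Mp \<ge> 0"
  shows "det (vander Mm Mp) \<noteq> 0"
proof
  let ?n = "Mdeg Mm Mp + 1"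
  let ?V = "vander Mm Mp"
  assume "det ?V = 0"
  then obtain v where v: "v \<in> carrier_vec ?n" "v \<noteq> 0\<^sub>v ?n" "?V *\<^sub>v v = 0\<^sub>v ?n"
    using det_0_iff_vec_prod_zero_field[OF vander_carrier] by blast
  define p :: "real poly" where "p = (\<Sum>j<?n. monom (v $ j) j)"
  have cp: "coeff p j = (if j < ?n then v $ j else 0)" for j
    by (simp add: p_def coeff_sum)
  have pp: "poly p x = (\<Sum>j<?n. v $ j * x ^ j)" for x
    by (simp add: p_def poly_sum poly_monom)
  have roots: "poly p (real_of_int (int i - Mm)) = 0" if "i < ?n" for i
  proof -
    have "(?V *\<^sub>v v) $ i = 0" using v(3) that by simp
    moreover have "(?V *\<^sub>v v) $ i = (\<Sum>j\<in>{0..<?n}. (real_of_int (int i - Mm)) ^ j * v $ j)"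
      using that v(1) by (simp add: vander_def scalar_prod_def)
    ultimately show ?thesis by (simp add: pp lessThan_atLeast0 mult.commute)
  qed
  have p0: "p = 0"
  proof (rule ccontr)
    assume "p \<noteq> 0"
    have "degree p \<le> Mdeg Mm Mp" by (rule degree_le) (simp add: cp)
    have sub: "(\<lambda>i. real_of_int (int i - Mm)) ` {..<?n} \<subseteq> {x. poly p x = 0}"
      using roots by auto
    have c1: "card ((\<lambda>i. real_of_int (int i - Mm)) ` {..<?n}) = ?n"
      by (subst card_image) (auto simp: inj_on_def)
    have c2: "card ((\<lambda>i. real_of_int (int i - Mm)) ` {..<?n}) \<le> card {x. poly p x = 0}"
      using card_mono[OF poly_roots_finite[OF \<open>p \<noteq> 0\<close>] sub] .
    have c3: "card {x. poly p x = 0} \<le> degree p" by (rule card_poly_roots_bound[OF \<open>p \<noteq> 0\<close>])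
    have "?n \<le> degree p" using c1 c2 c3 by linarith
    then show False using \<open>degree p \<le> Mdeg Mm Mp\<close> by simp
  qed
  have "v = 0\<^sub>v ?n"
  proof (rule eq_vecI)
    fix i assume "i < dim_vec (0\<^sub>v ?n :: real vec)"
    then have "i < ?n" by simp
    then show "v $ i = 0\<^sub>v ?n $ i" using cp[of i] p0 by simp
  qed (use v(1) in simp)
  with v(2) show False by simp
qed

lemma vander_inv_left:
  assumes "Mm + Mp \<ge> 0"
  shows "vander_inv Mm Mp * vander Mm Mp = 1\<^sub>m (Mdeg Mm Mp + 1)"
    and "vander_inv Mm Mp \<in> carrier_mat (Mdeg Mm Mp + 1) (Mdeg Mm Mp + 1)"
proof -
  let ?n = "Mdeg Mm Mp + 1"
  have U: "vander Mm Mp \<in> Units (ring_mat TYPE(real) ?n ())"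
    by (rule det_non_zero_imp_unit[OF vander_carrier vander_det[OF assms]])
  have "mat_inverse (vander Mm Mp) \<noteq> None"
  proof
    assume "mat_inverse (vander Mm Mp) = None"
    then have "vander Mm Mp \<notin> Units (ring_mat TYPE(real) ?n ())"
      by (rule mat_inverse(1)[OF vander_carrier])
    then show False using U by simp
  qed
  then obtain B where B: "mat_inverse (vander Mm Mp) = Some B" by (cases "mat_inverse (vander Mm Mp)") simp_all
  have "vander_inv Mm Mp = B" by (simp add: vander_inv_def B)
  then show "vander_inv Mm Mp * vander Mm Mp = 1\<^sub>m ?n"
    "vander_inv Mm Mp \<in> carrier_mat ?n ?n"
    using mat_inverse(2)[OF vander_carrier B] by simp_all
qed

lemma nu_delta:
  assumes "Mm + Mp \<ge> 0" "m \<le> Mdeg Mm Mp" "j \<le> Mdeg Mm Mp"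
  shows "nu Mm Mp m j = (if m = j then 1 else 0)"
proof -
  let ?n = "Mdeg Mm Mp + 1"
  let ?B = "vander_inv Mm Mp"
  have Bc: "?B \<in> carrier_mat ?n ?n" by (rule vander_inv_left(2)[OF assms(1)])
  have "(?B * vander Mm Mp) $$ (m, j) = (if m = j then 1 else 0)"
    using vander_inv_left(1)[OF assms(1)] assms by simp
  moreover have "(?B * vander Mm Mp) $$ (m, j) = (\<Sum>i\<in>{0..<?n}. ?B $$ (m, i) * (real_of_int (int i - Mm)) ^ j)"
    using assms Bc by (simp add: vander_def scalar_prod_def)
  moreover have "(\<Sum>i\<in>{0..<?n}. ?B $$ (m, i) * (real_of_int (int i - Mm)) ^ j) = nu Mm Mp m j"
  proof -
    have bij: "bij_betw (\<lambda>l. nat (l + Mm)) {-Mm..Mp} {0..<?n}"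
    proof (rule bij_betw_byWitness[where f' = "\<lambda>i. int i - Mm"])
    qed (use assms(1) in \<open>auto simp: Mdeg_def\<close>)
    define g where "g i = ?B $$ (m, i) * (real_of_int (int i - Mm)) ^ j" for i
    have "(\<Sum>l\<in>{-Mm..Mp}. g (nat (l + Mm))) = (\<Sum>i\<in>{0..<?n}. g i)"
      by (rule sum.reindex_bij_betw[OF bij])
    moreover have "(\<Sum>l\<in>{-Mm..Mp}. g (nat (l + Mm))) = nu Mm Mp m j"
      unfolding nu_def vinv_def by (rule sum.cong) (auto simp: g_def)
    ultimately show ?thesis by (simp add: g_def)
  qed
  ultimately show ?thesis by simp
qed
definition Bf :: "int \<Rightarrow> int \<Rightarrow> nat \<Rightarrow> real" where
  "Bf Mm Mp j = (\<Sum>m=0..Mdeg Mm Mp. (\<Sum>k=0..(Mdeg Mm Mp - m) div 2.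
       tau k * fact (m+2*k) / fact m * nu Mm Mp (m+2*k) j) * (1/2)^m)"

lemma acoef_moment: "(\<Sum>l=-Mm..Mp. acoef Mm Mp l * real_of_int l ^ j) = Bf Mm Mp j"
proof -
  let ?M = "Mdeg Mm Mp"
  have "(\<Sum>l=-Mm..Mp. acoef Mm Mp l * real_of_int l ^ j)
      = (\<Sum>l=-Mm..Mp. \<Sum>m=0..?M. \<Sum>k=0..(?M - m) div 2.
           (tau k * fact (m+2*k) / fact m * (1/2)^m) * (vinv Mm Mp (m+2*k) l * real_of_int l ^ j))"
    unfolding acoef_def by (simp add: sum_distrib_left sum_distrib_right mult_ac)
  also have "\<dots> = (\<Sum>m=0..?M. \<Sum>l=-Mm..Mp. \<Sum>k=0..(?M - m) div 2.
           (tau k * fact (m+2*k) / fact m * (1/2)^m) * (vinv Mm Mp (m+2*k) l * real_of_int l ^ j))"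
    by (rule sum.swap)
  also have "\<dots> = (\<Sum>m=0..?M. \<Sum>k=0..(?M - m) div 2. \<Sum>l=-Mm..Mp.
           (tau k * fact (m+2*k) / fact m * (1/2)^m) * (vinv Mm Mp (m+2*k) l * real_of_int l ^ j))"
    by (rule sum.cong[OF refl], rule sum.swap)
  also have "\<dots> = Bf Mm Mp j"
    by (simp add: Bf_def nu_def sum_distrib_left sum_distrib_right mult_ac)
  finally show ?thesis .
qed

lemma mu_split: "mu Mm Mp r (1/2) = Bf Mm Mp r / fact r - Gs r"
proof -
  have a: "(\<Sum>k = 0..r div 2. - tau k / fact (r - 2 * k) * (1/2::real) ^ (r - 2 * k)) = - Gs r"
    unfolding Gs_def sum_negf[symmetric] by (rule sum.cong) auto
  have b: "(\<Sum>m = 0..Mdeg Mm Mp.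
        (\<Sum>k = 0..(Mdeg Mm Mp - m) div 2.
           tau k * nu Mm Mp (m + 2 * k) r * fact (m + 2 * k) / (fact r * fact m)) * (1/2::real) ^ m)
     = Bf Mm Mp r / fact r"
    unfolding Bf_def sum_divide_distrib
    by (rule sum.cong[OF refl]) (simp add: sum_divide_distrib sum_distrib_right field_simps)
  show ?thesis unfolding mu_def a b by simp
qed

lemma inner_delta:
  fixes f :: "nat \<Rightarrow> real"
  assumes "m \<le> M" "j \<le> M"
  shows "(\<Sum>k=0..(M - m) div 2. if m + 2*k = j then f k else 0)
       = (if m \<le> j \<and> even (j - m) then f ((j - m) div 2) else 0)"
proof (cases "m \<le> j \<and> even (j - m)")
  case True
  define d where "d = (j - m) div 2"
  have d: "j - m = 2*d" using True unfolding d_def by (metis even_two_times_div_two)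
  have "(\<Sum>k=0..(M - m) div 2. if m + 2*k = j then f k else 0)
      = (\<Sum>k=0..(M - m) div 2. if k = d then f k else 0)"
    by (rule sum.cong) (use True d in auto)
  also have "\<dots> = f d" using d assms True by (simp add: sum.delta)
  finally show ?thesis using True d by simp
next
  case False
  have "(\<Sum>k=0..(M - m) div 2. if m + 2*k = j then f k else 0) = 0"
    by (rule sum.neutral) (use False in auto)
  then show ?thesis by (simp only: if_not_P[OF False])
qed

lemma Bf_low:
  assumes "Mm + Mp \<ge> 0" "j \<le> Mdeg Mm Mp"
  shows "Bf Mm Mp j = fact j * Gs j"
proof -
  let ?M = "Mdeg Mm Mp"
  let ?F = "\<lambda>m. (if m \<le> j \<and> even (j - m) then tau ((j - m) div 2) * fact j / fact m * (1/2::real)^m else 0)"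
  have "Bf Mm Mp j = (\<Sum>m=0..?M. (\<Sum>k=0..(?M - m) div 2.
       (if m + 2*k = j then tau k * fact (m+2*k) / fact m else 0)) * (1/2)^m)"
    unfolding Bf_def
  proof (intro sum.cong refl arg_cong2[where f = "(*)"])
    fix m k assume m: "m \<in> {0..?M}" and k: "k \<in> {0..(?M - m) div 2}"
    then have "m + 2*k \<le> ?M" by auto
    then show "tau k * fact (m+2*k) / fact m * nu Mm Mp (m+2*k) j
         = (if m + 2*k = j then tau k * fact (m+2*k) / fact m else 0)"
      using nu_delta[OF assms(1) _ assms(2)] by simp
  qed
  also have "\<dots> = (\<Sum>m=0..?M. ?F m)"
  proof (rule sum.cong[OF refl])
    fix m assume "m \<in> {0..?M}"
    then have "m \<le> ?M" by simp
    have "(\<Sum>k=0..(?M - m) div 2. (if m + 2*k = j then tau k * fact (m+2*k) / fact m else 0))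
      = (\<Sum>k=0..(?M - m) div 2. (if m + 2*k = j then tau k * fact j / fact m else 0))"
      by (rule sum.cong) auto
    also have "\<dots> = (if m \<le> j \<and> even (j - m) then tau ((j - m) div 2) * fact j / fact m else 0)"
      by (rule inner_delta[OF \<open>m \<le> ?M\<close> assms(2)])
    finally have X: "(\<Sum>k=0..(?M - m) div 2. (if m + 2*k = j then tau k * fact (m+2*k) / fact m else 0))
       = (if m \<le> j \<and> even (j - m) then tau ((j - m) div 2) * fact j / fact m else 0)" .
    show "(\<Sum>k=0..(?M - m) div 2. (if m + 2*k = j then tau k * fact (m+2*k) / fact m else 0)) * (1/2)^m = ?F m"
      unfolding X by (cases "m \<le> j \<and> even (j - m)", simp_all only: if_True if_False mult_zero_left simp_thms)
  qed
  also have "\<dots> = (\<Sum>m=0..j. ?F m)"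
    by (rule sum.mono_neutral_right) (use assms(2) in auto)
  also have "\<dots> = (\<Sum>i=0..j. ?F (j - i))"
    using sum.atLeastAtMost_rev[of ?F 0 j] by (simp only: add_0_right)
  also have "\<dots> = (\<Sum>i=0..j. if even i then tau (i div 2) * fact j / fact (j - 2*(i div 2)) * (1/2)^(j - 2*(i div 2)) else 0)"
    by (rule sum.cong) (auto elim!: evenE)
  also have "\<dots> = (\<Sum>k=0..j div 2. tau k * fact j / fact (j - 2*k) * (1/2)^(j - 2*k))"
    by (rule even_sum)
  also have "\<dots> = fact j * Gs j"
    unfolding Gs_def sum_distrib_left by (rule sum.cong) auto
  finally show ?thesis .
qed

definition Ds :: "int \<Rightarrow> int \<Rightarrow> nat \<Rightarrow> real" where
  "Ds Mm Mp s = (\<Sum>i=0..s. (-1)^i / fact (i+1) * (Bf Mm Mp (s-i) / fact (s-i)))"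

lemma D_low:
  assumes "Mm + Mp \<ge> 0" "s \<le> Mdeg Mm Mp"
  shows "Ds Mm Mp s = (if s = 0 then 1 else 0)"
proof -
  have "Ds Mm Mp s = (\<Sum>i=0..s. (-1)^i / fact (i+1) * Gs (s - i))"
    unfolding Ds_def
    by (rule sum.cong[OF refl]) (use assms Bf_low in simp)
  also have "\<dots> = (if s = 0 then 1 else 0)" by (rule DG_sum)
  finally show ?thesis .
qed

lemma D_high:
  assumes "Mm + Mp \<ge> 0" "Mdeg Mm Mp < s"
  shows "Ds Mm Mp s = Lambda Mm Mp s"
proof -
  let ?M = "Mdeg Mm Mp"
  let ?c = "\<lambda>i::nat. (-1::real)^i / fact (i+1)"
  let ?g = "\<lambda>i. ?c i * (Bf Mm Mp (s-i) / fact (s-i) - Gs (s-i))"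
  have "Ds Mm Mp s = (\<Sum>i=0..s. ?c i * Gs (s - i)) + (\<Sum>i=0..s. ?g i)"
    unfolding Ds_def sum.distrib[symmetric] by (rule sum.cong) (auto simp: algebra_simps)
  also have "(\<Sum>i=0..s. ?c i * Gs (s - i)) = 0" using assms(2) DG_sum[of s] by simp
  also have "(\<Sum>i=0..s. ?g i) = (\<Sum>i=0..s - ?M - 1. ?g i)"
  proof (rule sum.mono_neutral_right)
    show "\<forall>i\<in>{0..s} - {0..s - ?M - 1}. ?g i = 0"
    proof
      fix i assume "i \<in> {0..s} - {0..s - ?M - 1}"
      then have "s - i \<le> ?M" by auto
      then show "?g i = 0" using Bf_low[OF assms(1)] by simp
    qed
  qed auto
  also have "\<dots> = Lambda Mm Mp s"
    unfolding Lambda_def by (rule sum.cong) (auto simp: mu_split)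
  finally show ?thesis by simp
qed
lemma cancel_helper: "(k::real) \<noteq> 0 \<Longrightarrow> (k * a) / b / k = a / b"
  by simp

lemma diff_helper: "((A::real) * d) / k - (B * d) / k = d * ((A - B) / k)"
  by (cases "k = 0") (simp_all add: field_simps)

lemma Pm_expand:
  fixes x :: real
  shows "(x^(s+1) - (x-1)^(s+1)) / (real s + 1)
       = (\<Sum>i=0..s. (-1)^i * fact s / (fact (i+1) * fact (s-i)) * x^(s-i))"
proof -
  let ?t = "\<lambda>k. of_nat (Suc s choose k) * x^k * (-1::real)^(Suc s - k)"
  have "(x-1)^(s+1) = (\<Sum>k\<le>Suc s. ?t k)"
    using binomial_ring[of x "-1" "Suc s"] by simp
  also have "\<dots> = (\<Sum>k\<le>s. ?t k) + x^(s+1)" by (simp add: sum.atMost_Suc)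
  finally have "x^(s+1) - (x-1)^(s+1) = - (\<Sum>k\<le>s. ?t k)" by simp
  also have "\<dots> = (\<Sum>k=0..s. of_nat (Suc s choose k) * x^k * (-1::real)^(s - k))"
    unfolding sum_negf[symmetric] atMost_atLeast0
  proof (rule sum.cong[OF refl])
    fix k assume "k \<in> {0..s}"
    then have "Suc s - k = Suc (s - k)" by auto
    then show "- ?t k = of_nat (Suc s choose k) * x^k * (-1::real)^(s - k)" by simp
  qed
  also have "\<dots> = (\<Sum>i=0..s. of_nat (Suc s choose (s - i)) * x^(s - i) * (-1::real)^(s - (s - i)))"
    using sum.atLeastAtMost_rev[of "\<lambda>k. of_nat (Suc s choose k) * x^k * (-1::real)^(s - k)" 0 s]
    by (simp only: add_0_right)
  finally have eq: "x^(s+1) - (x-1)^(s+1) = (\<Sum>i=0..s. of_nat (Suc s choose (s - i)) * x^(s - i) * (-1::real)^(s - (s - i)))" .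
  show ?thesis unfolding eq sum_divide_distrib
  proof (rule sum.cong[OF refl])
    fix i assume i: "i \<in> {0..s}"
    then have si: "s - (s - i) = i" "Suc s - (s - i) = Suc i" by auto
    have pos: "real s + 1 > 0" by simp
    have "(of_nat (Suc s choose (s - i)) :: real) = fact (Suc s) / (fact (s - i) * fact (Suc i))"
      using binomial_fact[of "s - i" "Suc s", where 'a=real] si by simp
    moreover have "fact (Suc s) = (real s + 1) * (fact s :: real)" by (simp add: fact_Suc)
    ultimately have C0: "(of_nat (Suc s choose (s - i)) :: real) = ((real s + 1) * fact s) / (fact (s - i) * fact (Suc i))"
      by simp
    have C: "(of_nat (Suc s choose (s - i)) :: real) / (real s + 1) = fact s / (fact (i+1) * fact (s-i))"
      unfolding C0 using cancel_helper[of "real s + 1" "fact s" "fact (s - i) * fact (Suc i)"] pos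
      by (simp add: mult.commute)
    have "of_nat (Suc s choose (s - i)) * x^(s - i) * (-1::real)^(s - (s - i)) / (real s + 1)
      = (of_nat (Suc s choose (s - i)) / (real s + 1)) * ((-1)^i * x^(s-i))"
      unfolding si(1) by (simp add: divide_inverse mult_ac)
    also have "\<dots> = (-1)^i * fact s / (fact (i+1) * fact (s-i)) * x^(s-i)"
      unfolding C by (simp add: divide_inverse mult_ac)
    finally show "of_nat (Suc s choose (s - i)) * x^(s - i) * (-1::real)^(s - (s - i)) / (real s + 1)
      = (-1)^i * fact s / (fact (i+1) * fact (s-i)) * x^(s-i)" .
  qed
qed

lemma E_val:
  "(\<Sum>l=-Mm..Mp. acoef Mm Mp l * (((real_of_int l)^(s+1) - (real_of_int l - 1)^(s+1)) / (real s + 1)))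
    = fact s * Ds Mm Mp s"
proof -
  have "(\<Sum>l=-Mm..Mp. acoef Mm Mp l * (((real_of_int l)^(s+1) - (real_of_int l - 1)^(s+1)) / (real s + 1)))
     = (\<Sum>l=-Mm..Mp. \<Sum>i=0..s. ((-1)^i * fact s / (fact (i+1) * fact (s-i))) * (acoef Mm Mp l * (real_of_int l)^(s-i)))"
    unfolding Pm_expand sum_distrib_left by (rule sum.cong[OF refl])+ (simp add: mult_ac)
  also have "\<dots> = (\<Sum>i=0..s. \<Sum>l=-Mm..Mp. ((-1)^i * fact s / (fact (i+1) * fact (s-i))) * (acoef Mm Mp l * (real_of_int l)^(s-i)))"
    by (rule sum.swap)
  also have "\<dots> = (\<Sum>i=0..s. ((-1)^i * fact s / (fact (i+1) * fact (s-i))) * Bf Mm Mp (s-i))"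
    by (rule sum.cong[OF refl]) (simp only: sum_distrib_left[symmetric] acoef_moment)
  also have "\<dots> = fact s * Ds Mm Mp s"
    unfolding Ds_def sum_distrib_left by (rule sum.cong) (simp_all add: field_simps)
  finally show ?thesis .
qed

lemma cell_mono:
  assumes dx: "dx > 0"
  shows "cell_avg dx (\<lambda>x. (x - c)^s) (c - dx/2 + real_of_int l * dx)
    = dx^s * (((real_of_int l)^(s+1) - (real_of_int l - 1)^(s+1)) / (real s + 1))"
proof -
  let ?a = "c - dx/2 + real_of_int l * dx - dx/2" and ?b = "c - dx/2 + real_of_int l * dx + dx/2"
  let ?f = "\<lambda>y. (y - c)^(s+1) / (real s + 1)"
  have ab: "?a \<le> ?b" using dx by simp
  have "((\<lambda>x. (x - c)^s) has_integral (?f ?b - ?f ?a)) {?a..?b}"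
  proof (rule fundamental_theorem_of_calculus[OF ab])
    fix x assume "x \<in> {?a..?b}"
    have d0: "((\<lambda>y. y - c) has_real_derivative 1) (at x within {?a..?b})"
      by (auto intro!: derivative_eq_intros)
    have "((\<lambda>y. (y - c)^(s+1)) has_real_derivative (real (s+1) * (x - c)^s)) (at x within {?a..?b})"
      using DERIV_power_Suc[OF d0, of s] by simp
    then have "(?f has_real_derivative (real (s+1) * (x - c)^s) / (real s + 1)) (at x within {?a..?b})"
      by (rule DERIV_cdivide)
    moreover have "real (s+1) * (x - c)^s / (real s + 1) = (x - c)^s"
      by (simp add: add.commute)
    ultimately have "(?f has_real_derivative (x - c)^s) (at x within {?a..?b})"
      by (simp only:)
    then show "(?f has_vector_derivative (x - c)^s) (at x within {?a..?b})"
      by (simp add: has_real_derivative_iff_has_vector_derivative)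
  qed
  then have I: "integral {?a..?b} (\<lambda>x. (x - c)^s) = ?f ?b - ?f ?a" by (rule integral_unique)
  have b: "?b - c = real_of_int l * dx" and a: "?a - c = (real_of_int l - 1) * dx" by (simp_all add: algebra_simps)
  let ?P = "((real_of_int l)^(s+1) - (real_of_int l - 1)^(s+1)) / (real s + 1)"
  have "?f ?b - ?f ?a = ((real_of_int l)^(s+1) * dx^(s+1)) / (real s + 1) - ((real_of_int l - 1)^(s+1) * dx^(s+1)) / (real s + 1)"
    unfolding a b by (simp only: power_mult_distrib)
  also have "\<dots> = dx^(s+1) * ?P"
    by (rule diff_helper)
  finally have e1: "?f ?b - ?f ?a = dx^(s+1) * ?P" .
  have "cell_avg dx (\<lambda>x. (x - c)^s) (c - dx/2 + real_of_int l * dx) = (1/dx) * (?f ?b - ?f ?a)"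
    unfolding cell_avg_def I ..
  also have "\<dots> = (1/dx) * (dx^(s+1) * ?P)" unfolding e1 ..
  also have "\<dots> = dx^s * ?P"
    using dx by (simp only: power_Suc Suc_eq_plus1[symmetric]) simp
  finally show ?thesis .
qed
lemma cell_sum:
  assumes dx: "dx > 0"
  shows "cell_avg dx (\<lambda>x. \<Sum>s\<le>K. b s * (x - c)^s) y = (\<Sum>s\<le>K. b s * cell_avg dx (\<lambda>x. (x - c)^s) y)"
proof -
  let ?S = "{y - dx/2..y + dx/2}"
  have "integral ?S (\<lambda>x. \<Sum>s\<le>K. b s * (x - c)^s) = (\<Sum>s\<le>K. integral ?S (\<lambda>x. b s * (x - c)^s))"
    by (rule integral_sum) (auto intro!: integrable_continuous_interval continuous_intros)
  also have "\<dots> = (\<Sum>s\<le>K. b s * integral ?S (\<lambda>x. (x - c)^s))"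
  proof (rule sum.cong[OF refl])
    fix s
    have "integral ?S (\<lambda>x. (x - c)^s * b s) = integral ?S (\<lambda>x. (x - c)^s) * b s"
      by (rule integral_mult_left)
    then show "integral ?S (\<lambda>x. b s * (x - c)^s) = b s * integral ?S (\<lambda>x. (x - c)^s)"
      by (simp add: mult.commute)
  qed
  finally show ?thesis unfolding cell_avg_def by (simp add: sum_distrib_left mult_ac)
qed

lemma L_poly:
  assumes dx: "dx > 0"
  shows "(\<Sum>l=-Mm..Mp. acoef Mm Mp l * cell_avg dx (\<lambda>x. \<Sum>s\<le>K. b s * (x - c)^s) (c - dx/2 + real_of_int l * dx))
       = (\<Sum>s\<le>K. b s * dx^s * (fact s * Ds Mm Mp s))"
proof -
  let ?P = "\<lambda>s l. ((real_of_int l)^(s+1) - (real_of_int l - 1)^(s+1)) / (real s + 1)"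
  have "(\<Sum>l=-Mm..Mp. acoef Mm Mp l * cell_avg dx (\<lambda>x. \<Sum>s\<le>K. b s * (x - c)^s) (c - dx/2 + real_of_int l * dx))
      = (\<Sum>l=-Mm..Mp. \<Sum>s\<le>K. (b s * dx^s) * (acoef Mm Mp l * ?P s l))"
    unfolding cell_sum[OF dx] cell_mono[OF dx] sum_distrib_left
    by (rule sum.cong[OF refl])+ (simp add: mult_ac)
  also have "\<dots> = (\<Sum>s\<le>K. \<Sum>l=-Mm..Mp. (b s * dx^s) * (acoef Mm Mp l * ?P s l))"
    by (rule sum.swap)
  also have "\<dots> = (\<Sum>s\<le>K. b s * dx^s * (fact s * Ds Mm Mp s))"
    by (rule sum.cong[OF refl]) (simp only: sum_distrib_left[symmetric] E_val)
  finally show ?thesis .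
qed

lemma exact_part:
  fixes p :: "real poly"
  assumes M: "Mm + Mp \<ge> 0" and dx: "dx > 0" and deg: "degree p \<le> Mdeg Mm Mp"
  shows "poly p c = (\<Sum>l=-Mm..Mp. acoef Mm Mp l * cell_avg dx (poly p) (c - dx/2 + real_of_int l * dx))"
proof -
  define q where "q = pcompose p [:c, 1:]"
  have dq: "degree q = degree p" by (simp add: q_def degree_pcompose)
  have pq: "poly p x = (\<Sum>s\<le>degree q. coeff q s * (x - c)^s)" for x
  proof -
    have "poly p x = poly q (x - c)" by (simp add: q_def poly_pcompose)
    then show ?thesis by (simp add: poly_altdef)
  qed
  have fun_eq: "poly p = (\<lambda>x. \<Sum>s\<le>degree q. coeff q s * (x - c)^s)" using pq by auto
  have "(\<Sum>l=-Mm..Mp. acoef Mm Mp l * cell_avg dx (poly p) (c - dx/2 + real_of_int l * dx))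
     = (\<Sum>s\<le>degree q. coeff q s * dx^s * (fact s * Ds Mm Mp s))"
    unfolding fun_eq by (rule L_poly[OF dx])
  also have "\<dots> = (\<Sum>s\<le>degree q. if s = 0 then coeff q 0 else 0)"
  proof (rule sum.cong[OF refl])
    fix s assume "s \<in> {..degree q}"
    then have "s \<le> Mdeg Mm Mp" using dq deg by simp
    then show "coeff q s * dx^s * (fact s * Ds Mm Mp s) = (if s = 0 then coeff q 0 else 0)"
      using D_low[OF M] by simp
  qed
  also have "\<dots> = coeff q 0" by (simp add: sum.delta)
  also have "\<dots> = poly p c" using pq[of c] by (simp add: poly_altdef[symmetric] poly_0_coeff_0[symmetric])
  finally show ?thesis ..
qed

lemma sum_split_taylor:
  assumes M: "Mm + Mp \<ge> 0" and MN: "Mdeg Mm Mp \<le> N"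
  shows "(\<Sum>s\<le>N. (g s / fact s) * dx^s * (fact s * Ds Mm Mp s))
       = g 0 + (\<Sum>s = Mdeg Mm Mp + 1..N. Lambda Mm Mp s * dx^s * g s)"
proof -
  let ?M = "Mdeg Mm Mp"
  let ?f = "\<lambda>s. (g s / fact s) * dx^s * (fact s * Ds Mm Mp s)"
  have un: "{..N} = {..?M} \<union> {?M+1..N}" using MN by auto
  have "(\<Sum>s\<le>N. ?f s) = (\<Sum>s\<le>?M. ?f s) + (\<Sum>s = ?M+1..N. ?f s)"
    unfolding un by (rule sum.union_disjoint) auto
  also have "(\<Sum>s\<le>?M. ?f s) = (\<Sum>s\<le>?M. if s = 0 then g 0 else 0)"
    by (rule sum.cong[OF refl]) (use D_low[OF M] in auto)
  also have "\<dots> = g 0" by (simp add: sum.delta)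
  also have "(\<Sum>s = ?M+1..N. ?f s) = (\<Sum>s = ?M+1..N. Lambda Mm Mp s * dx^s * g s)"
    by (rule sum.cong[OF refl]) (use D_high[OF M] in auto)
  finally show ?thesis .
qed
lemma remainder_bound:
  fixes h :: "real \<Rightarrow> real"
  assumes I_open: "open I" and c_in: "c \<in> I"
    and h_deriv: "\<forall>k\<le>N. \<forall>x\<in>I. ((deriv ^^ k) h has_real_derivative (deriv ^^ Suc k) h x) (at x)"
    and h_cont: "continuous_on I ((deriv ^^ Suc N) h)"
  shows "\<exists>e Cr. e > 0 \<and> Cr \<ge> 0 \<and> cball c e \<subseteq> I \<and>
    (\<forall>x. \<bar>x - c\<bar> \<le> e \<longrightarrow> \<bar>h x - (\<Sum>s\<le>N. ((deriv ^^ s) h c / fact s) * (x - c)^s)\<bar> \<le> Cr * \<bar>x - c\<bar>^(N+1))"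
proof -
  obtain e where e: "e > 0" "cball c e \<subseteq> I" using open_contains_cball I_open c_in by blast
  have "compact ((deriv ^^ Suc N) h ` cball c e)"
    by (rule compact_continuous_image[OF continuous_on_subset[OF h_cont e(2)] compact_cball])
  then obtain Bd where Bd: "\<forall>y \<in> (deriv ^^ Suc N) h ` cball c e. norm y \<le> Bd"
    using compact_imp_bounded bounded_iff by metis
  have Bd0: "Bd \<ge> 0"
  proof -
    have "c \<in> cball c e" using e by simp
    then have "norm ((deriv ^^ Suc N) h c) \<le> Bd" using Bd by blast
    then show ?thesis by (meson norm_ge_zero order_trans)
  qed
  define Cr where "Cr = Bd / fact (Suc N)"
  have Cr0: "Cr \<ge> 0" using Bd0 by (simp add: Cr_def)
  have main: "\<bar>h x - (\<Sum>s\<le>N. ((deriv ^^ s) h c / fact s) * (x - c)^s)\<bar> \<le> Cr * \<bar>x - c\<bar>^(N+1)"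
    if x: "\<bar>x - c\<bar> \<le> e" for x
  proof (cases "x = c")
    case True
    have "(\<Sum>s\<le>N. ((deriv ^^ s) h c / fact s) * (c - c)^s) = (\<Sum>s\<le>N. if s = 0 then h c else 0)"
      by (rule sum.cong[OF refl]) auto
    also have "\<dots> = h c" by (simp add: sum.delta)
    finally show ?thesis using True by simp
  next
    case False
    have D: "\<forall>m t. m < Suc N \<and> c - e \<le> t \<and> t \<le> c + e \<longrightarrow> DERIV ((deriv ^^ m) h) t :> (deriv ^^ Suc m) h t"
    proof (intro allI impI)
      fix m t assume mt: "m < Suc N \<and> c - e \<le> t \<and> t \<le> c + e"
      then have "t \<in> cball c e" by (auto simp: dist_real_def)
      then have "t \<in> I" using e by auto
      then show "DERIV ((deriv ^^ m) h) t :> (deriv ^^ Suc m) h t" using h_deriv mt by auto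
    qed
    obtain t where t: "(if x < c then x < t \<and> t < c else c < t \<and> t < x)"
      and tay: "h x = (\<Sum>m<Suc N. ((deriv ^^ m) h c / fact m) * (x - c)^m)
                   + ((deriv ^^ Suc N) h t / fact (Suc N)) * (x - c)^(Suc N)"
      using Taylor[of "Suc N" "\<lambda>m. (deriv ^^ m) h" h "c - e" "c + e" c x] D x e False
      by (auto simp: abs_le_iff)
    have "t \<in> cball c e" using t x by (auto simp: dist_real_def split: if_splits)
    then have tb: "\<bar>(deriv ^^ Suc N) h t\<bar> \<le> Bd" using Bd by auto
    have "h x - (\<Sum>s\<le>N. ((deriv ^^ s) h c / fact s) * (x - c)^s)
        = ((deriv ^^ Suc N) h t / fact (Suc N)) * (x - c)^(Suc N)"
      using tay by (simp add: lessThan_Suc_atMost)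
    then have "\<bar>h x - (\<Sum>s\<le>N. ((deriv ^^ s) h c / fact s) * (x - c)^s)\<bar>
        = \<bar>(deriv ^^ Suc N) h t\<bar> / fact (Suc N) * \<bar>x - c\<bar>^(Suc N)"
      by (simp add: abs_mult power_abs)
    also have "\<dots> \<le> Bd / fact (Suc N) * \<bar>x - c\<bar>^(Suc N)"
      by (intro mult_right_mono divide_right_mono tb) auto
    finally show ?thesis by (simp add: Cr_def)
  qed
  show ?thesis using e Cr0 main by blast
qed
lemma abs_cell_helper:
  fixes x c dx :: real
  assumes "x - c \<ge> (real_of_int l - 1) * dx" "x - c \<le> real_of_int l * dx" "dx > 0"
  shows "\<bar>x - c\<bar> \<le> (\<bar>real_of_int l\<bar> + 1) * dx"
proof -
  define A where "A = real_of_int l * dx"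
  define B where "B = \<bar>real_of_int l\<bar> * dx"
  have a: "A \<le> B" unfolding A_def B_def
    using assms(3) by (intro mult_right_mono) auto
  have b: "- A \<le> B" unfolding A_def B_def
    using assms(3) mult_right_mono[of "- real_of_int l" "\<bar>real_of_int l\<bar>" dx] by auto
  have c: "(\<bar>real_of_int l\<bar> + 1) * dx = B + dx"
          "(real_of_int l - 1) * dx = A - dx" by (simp_all add: algebra_simps A_def B_def)
  have d: "x - c \<ge> A - dx" "x - c \<le> A" using assms c(2) by (simp_all add: A_def)
  show ?thesis unfolding c(1) using a b d by (simp add: abs_le_iff)
qed
lemma main_est:
  fixes h :: "real \<Rightarrow> real"
  assumes M: "Mm + Mp \<ge> 0" and MN: "Mdeg Mm Mp \<le> N"
    and I_open: "open I" and c_in: "c \<in> I"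
    and h_deriv: "\<forall>k\<le>N. \<forall>x\<in>I. ((deriv ^^ k) h has_real_derivative (deriv ^^ Suc k) h x) (at x)"
    and h_cont: "continuous_on I ((deriv ^^ Suc N) h)"
  shows "\<exists>C \<delta>. \<delta> > 0 \<and> C \<ge> 0 \<and> (\<forall>dx. 0 < dx \<and> dx < \<delta> \<longrightarrow>
      \<bar>(\<Sum>l=-Mm..Mp. acoef Mm Mp l * cell_avg dx h (c - dx/2 + real_of_int l * dx)) - h c
        - (\<Sum>s = Mdeg Mm Mp + 1..N. Lambda Mm Mp s * dx^s * (deriv ^^ s) h c)\<bar> \<le> C * dx^(N+1))"
proof -
  obtain e Cr where e: "e > 0" "Cr \<ge> 0" "cball c e \<subseteq> I"
    and rb: "\<And>x. \<bar>x - c\<bar> \<le> e \<Longrightarrow> \<bar>h x - (\<Sum>s\<le>N. ((deriv ^^ s) h c / fact s) * (x - c)^s)\<bar> \<le> Cr * \<bar>x - c\<bar>^(N+1)"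
    using remainder_bound[OF I_open c_in h_deriv h_cont] by blast
  define T where "T = (\<lambda>x. \<Sum>s\<le>N. ((deriv ^^ s) h c / fact s) * (x - c)^s)"
  define K where "K = real_of_int (\<bar>Mm\<bar> + \<bar>Mp\<bar>) + 1"
  have K1: "K \<ge> 1" by (simp add: K_def)
  define \<delta> where "\<delta> = e / K"
  define A where "A = (\<Sum>l=-Mm..Mp. \<bar>acoef Mm Mp l\<bar>)"
  define C where "C = A * (Cr * K^(N+1))"
  have A0: "A \<ge> 0" by (simp add: A_def sum_nonneg)
  have C0: "C \<ge> 0" using A0 e(2) K1 by (simp add: C_def)
  have \<delta>0: "\<delta> > 0" using e K1 by (simp add: \<delta>_def)
  have hcont: "isCont h x" if "x \<in> I" for x
  proof -
    have "(h has_real_derivative (deriv ^^ Suc 0) h x) (at x)" using h_deriv that by force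
    then show ?thesis by (rule DERIV_isCont)
  qed
  have est: "\<bar>(\<Sum>l=-Mm..Mp. acoef Mm Mp l * cell_avg dx h (c - dx/2 + real_of_int l * dx)) - h c
        - (\<Sum>s = Mdeg Mm Mp + 1..N. Lambda Mm Mp s * dx^s * (deriv ^^ s) h c)\<bar> \<le> C * dx^(N+1)"
    if dx: "0 < dx" "dx < \<delta>" for dx
  proof -
    have Kdx: "K * dx < e" using dx K1 by (simp add: \<delta>_def field_simps)
    define R where "R = (\<lambda>x. h x - T x)"
    have cellR: "cell_avg dx h (c - dx/2 + real_of_int l * dx)
        = cell_avg dx T (c - dx/2 + real_of_int l * dx) + cell_avg dx R (c - dx/2 + real_of_int l * dx)
      \<and> \<bar>cell_avg dx R (c - dx/2 + real_of_int l * dx)\<bar> \<le> Cr * (K * dx)^(N+1)"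
      if l: "l \<in> {-Mm..Mp}" for l
    proof -
      let ?y = "c - dx/2 + real_of_int l * dx"
      let ?J = "{?y - dx/2..?y + dx/2}"
      have labs: "\<bar>real_of_int l\<bar> + 1 \<le> K" using l by (auto simp: K_def)
      have inJ: "\<bar>x - c\<bar> \<le> K * dx" if "x \<in> ?J" for x
      proof -
        have "x - c \<ge> (real_of_int l - 1) * dx" "x - c \<le> real_of_int l * dx"
          using that by (auto simp: algebra_simps)
        then have "\<bar>x - c\<bar> \<le> (\<bar>real_of_int l\<bar> + 1) * dx"
          using dx(1) by (intro abs_cell_helper) auto
        also have "\<dots> \<le> K * dx" using labs dx(1) by (intro mult_right_mono) auto
        finally show ?thesis .
      qed
      have JI: "?J \<subseteq> I"
      proof
        fix x assume "x \<in> ?J"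
        then have "\<bar>x - c\<bar> \<le> e" using inJ Kdx by fastforce
        then have "x \<in> cball c e" by (simp add: dist_real_def abs_minus_commute)
        then show "x \<in> I" using e(3) by auto
      qed
      have ch: "continuous_on ?J h"
        by (rule continuous_at_imp_continuous_on) (use JI hcont in auto)
      have cT: "continuous_on ?J T" unfolding T_def by (intro continuous_intros)
      have cR: "continuous_on ?J R" unfolding R_def by (intro continuous_intros ch cT)
      have ih: "h integrable_on ?J" by (rule integrable_continuous_interval[OF ch])
      have iT: "T integrable_on ?J" by (rule integrable_continuous_interval[OF cT])
      have "integral ?J R = integral ?J h - integral ?J T"
        unfolding R_def by (rule integral_diff[OF ih iT])
      then have hs: "integral ?J h = integral ?J T + integral ?J R" by simp
      have split: "cell_avg dx h ?y = cell_avg dx T ?y + cell_avg dx R ?y"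
        unfolding cell_avg_def by (simp only: hs distrib_left)
      have bnd: "norm (R x) \<le> Cr * (K * dx)^(N+1)" if "x \<in> ?J" for x
      proof -
        have "\<bar>x - c\<bar> \<le> e" using inJ[OF that] Kdx by linarith
        then have "\<bar>R x\<bar> \<le> Cr * \<bar>x - c\<bar>^(N+1)" using rb unfolding R_def T_def by blast
        also have "\<dots> \<le> Cr * (K * dx)^(N+1)"
          by (intro mult_left_mono power_mono inJ[OF that] e(2)) simp
        finally show ?thesis by simp
      qed
      have "norm (integral ?J R) \<le> Cr * (K * dx)^(N+1) * (?y + dx/2 - (?y - dx/2))"
        by (rule integral_bound) (use dx bnd cR in auto)
      then have "\<bar>integral ?J R\<bar> \<le> Cr * (K * dx)^(N+1) * dx" by simp
      then have "\<bar>cell_avg dx R ?y\<bar> \<le> Cr * (K * dx)^(N+1)"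
        unfolding cell_avg_def using dx(1) by (simp add: abs_mult field_simps)
      with split show ?thesis by blast
    qed
    have "(\<Sum>l=-Mm..Mp. acoef Mm Mp l * cell_avg dx h (c - dx/2 + real_of_int l * dx))
       = (\<Sum>l=-Mm..Mp. acoef Mm Mp l * cell_avg dx T (c - dx/2 + real_of_int l * dx))
       + (\<Sum>l=-Mm..Mp. acoef Mm Mp l * cell_avg dx R (c - dx/2 + real_of_int l * dx))"
      unfolding sum.distrib[symmetric] by (rule sum.cong[OF refl]) (use cellR in \<open>simp add: algebra_simps\<close>)
    also have "(\<Sum>l=-Mm..Mp. acoef Mm Mp l * cell_avg dx T (c - dx/2 + real_of_int l * dx))
       = h c + (\<Sum>s = Mdeg Mm Mp + 1..N. Lambda Mm Mp s * dx^s * (deriv ^^ s) h c)"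
    proof -
      have "(\<Sum>l=-Mm..Mp. acoef Mm Mp l * cell_avg dx T (c - dx/2 + real_of_int l * dx))
          = (\<Sum>s\<le>N. ((deriv ^^ s) h c / fact s) * dx^s * (fact s * Ds Mm Mp s))"
        unfolding T_def by (rule L_poly[OF dx(1)])
      also have "\<dots> = (deriv ^^ 0) h c + (\<Sum>s = Mdeg Mm Mp + 1..N. Lambda Mm Mp s * dx^s * (deriv ^^ s) h c)"
        by (rule sum_split_taylor[OF M MN])
      finally show ?thesis by simp
    qed
    finally have eq: "(\<Sum>l=-Mm..Mp. acoef Mm Mp l * cell_avg dx h (c - dx/2 + real_of_int l * dx)) - h c
        - (\<Sum>s = Mdeg Mm Mp + 1..N. Lambda Mm Mp s * dx^s * (deriv ^^ s) h c)
       = (\<Sum>l=-Mm..Mp. acoef Mm Mp l * cell_avg dx R (c - dx/2 + real_of_int l * dx))" by simp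
    have "\<bar>\<Sum>l=-Mm..Mp. acoef Mm Mp l * cell_avg dx R (c - dx/2 + real_of_int l * dx)\<bar>
       \<le> (\<Sum>l=-Mm..Mp. \<bar>acoef Mm Mp l * cell_avg dx R (c - dx/2 + real_of_int l * dx)\<bar>)"
      by (rule sum_abs)
    also have "\<dots> \<le> (\<Sum>l=-Mm..Mp. \<bar>acoef Mm Mp l\<bar> * (Cr * (K * dx)^(N+1)))"
    proof (rule sum_mono)
      fix l assume "l \<in> {-Mm..Mp}"
      then show "\<bar>acoef Mm Mp l * cell_avg dx R (c - dx/2 + real_of_int l * dx)\<bar> \<le> \<bar>acoef Mm Mp l\<bar> * (Cr * (K * dx)^(N+1))"
        using cellR unfolding abs_mult by (intro mult_left_mono) auto
    qed
    also have "\<dots> = A * (Cr * (K * dx)^(N+1))"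
      unfolding A_def by (rule sum_distrib_right[symmetric])
    also have "\<dots> = C * dx^(N+1)"
      by (simp add: C_def power_mult_distrib mult_ac)
    finally show ?thesis unfolding eq .
  qed
  show ?thesis using \<delta>0 C0 est by blast
qed
theorem corollary2:
  fixes h :: "real \<Rightarrow> real" and I :: "real set" and c :: real
    and Mm Mp :: int and N :: nat
    and pf ph :: "real \<Rightarrow> real poly"
  assumes M_nonneg: "Mm + Mp \<ge> 0"
    and N_ge: "N \<ge> Mdeg Mm Mp + 1"
    and I_open: "open I" and I_interval: "is_interval I" and c_in: "c \<in> I"
    and h_deriv: "\<forall>k\<le>N. \<forall>x\<in>I.
        ((deriv ^^ k) h has_real_derivative (deriv ^^ Suc k) h x) (at x)"
    and h_cont: "continuous_on I ((deriv ^^ Suc N) h)"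
    and pf_deg: "\<forall>dx>0. degree (pf dx) \<le> Mdeg Mm Mp"
    and pf_interp: "\<forall>dx>0. \<forall>l\<in>{-Mm..Mp}.
        poly (pf dx) (c - dx / 2 + real_of_int l * dx) = cell_avg dx h (c - dx / 2 + real_of_int l * dx)"
    and ph_deg: "\<forall>dx>0. degree (ph dx) \<le> Mdeg Mm Mp"
    and ph_rec: "\<forall>dx>0. \<forall>x. poly (pf dx) x = cell_avg dx (poly (ph dx)) x"
  shows "(\<forall>dx>0. poly (ph dx) c =
            (\<Sum>l = -Mm..Mp. acoef Mm Mp l * cell_avg dx h (c - dx / 2 + real_of_int l * dx)))
       \<and> (\<lambda>dx. poly (ph dx) c - h c
             - (\<Sum>s = Mdeg Mm Mp + 1..N. Lambda Mm Mp s * dx ^ s * (deriv ^^ s) h c))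
           \<in> O[at_right 0](\<lambda>dx. dx ^ (N + 1))
       \<and> (\<lambda>dx. poly (ph dx) c - h c) \<in> O[at_right 0](\<lambda>dx. dx ^ (Mdeg Mm Mp + 1))"
proof -
  have M: "Mm + Mp \<ge> 0" by (rule M_nonneg)
  have MN: "Mdeg Mm Mp \<le> N" using N_ge by simp
  have part1: "\<forall>dx>0. poly (ph dx) c =
            (\<Sum>l = -Mm..Mp. acoef Mm Mp l * cell_avg dx h (c - dx / 2 + real_of_int l * dx))"
  proof (intro allI impI)
    fix dx :: real assume dx: "dx > 0"
    have "poly (ph dx) c = (\<Sum>l=-Mm..Mp. acoef Mm Mp l * cell_avg dx (poly (ph dx)) (c - dx/2 + real_of_int l * dx))"
      by (rule exact_part[OF M dx]) (use ph_deg dx in auto)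
    also have "\<dots> = (\<Sum>l = -Mm..Mp. acoef Mm Mp l * cell_avg dx h (c - dx / 2 + real_of_int l * dx))"
    proof (rule sum.cong[OF refl])
      fix l assume l: "l \<in> {-Mm..Mp}"
      show "acoef Mm Mp l * cell_avg dx (poly (ph dx)) (c - dx/2 + real_of_int l * dx)
          = acoef Mm Mp l * cell_avg dx h (c - dx / 2 + real_of_int l * dx)"
        using ph_rec[rule_format, OF dx, of "c - dx/2 + real_of_int l * dx"]
          pf_interp[rule_format, OF dx l] by simp
    qed
    finally show "poly (ph dx) c =
            (\<Sum>l = -Mm..Mp. acoef Mm Mp l * cell_avg dx h (c - dx / 2 + real_of_int l * dx))" .
  qed
  obtain C \<delta> where C\<delta>: "\<delta> > 0" "C \<ge> 0"
    and est: "\<And>dx. 0 < dx \<Longrightarrow> dx < \<delta> \<Longrightarrow>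
      \<bar>(\<Sum>l=-Mm..Mp. acoef Mm Mp l * cell_avg dx h (c - dx/2 + real_of_int l * dx)) - h c
        - (\<Sum>s = Mdeg Mm Mp + 1..N. Lambda Mm Mp s * dx^s * (deriv ^^ s) h c)\<bar> \<le> C * dx^(N+1)"
    using main_est[OF M MN I_open c_in h_deriv h_cont] by blast
  have ev: "\<forall>\<^sub>F dx in at_right 0. 0 < dx \<and> dx < min \<delta> 1"
    using eventually_at_right_real[of 0 "min \<delta> 1"] C\<delta>(1) by (auto elim: eventually_mono)
  have est2: "\<bar>poly (ph dx) c - h c
             - (\<Sum>s = Mdeg Mm Mp + 1..N. Lambda Mm Mp s * dx ^ s * (deriv ^^ s) h c)\<bar> \<le> C * dx^(N+1)"
    if "0 < dx" "dx < min \<delta> 1" for dx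
    using est[of dx] part1 that by auto
  have part2: "(\<lambda>dx. poly (ph dx) c - h c
             - (\<Sum>s = Mdeg Mm Mp + 1..N. Lambda Mm Mp s * dx ^ s * (deriv ^^ s) h c))
           \<in> O[at_right 0](\<lambda>dx. dx ^ (N + 1))"
  proof (rule bigoI)
    show "\<forall>\<^sub>F dx in at_right 0. norm (poly (ph dx) c - h c
             - (\<Sum>s = Mdeg Mm Mp + 1..N. Lambda Mm Mp s * dx ^ s * (deriv ^^ s) h c)) \<le> C * norm (dx ^ (N + 1))"
      using ev by (rule eventually_mono) (use est2 in auto)
  qed
  define Ls where "Ls = (\<Sum>s = Mdeg Mm Mp + 1..N. \<bar>Lambda Mm Mp s * (deriv ^^ s) h c\<bar>)"
  have part3: "(\<lambda>dx. poly (ph dx) c - h c) \<in> O[at_right 0](\<lambda>dx. dx ^ (Mdeg Mm Mp + 1))"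
  proof (rule bigoI)
    show "\<forall>\<^sub>F dx in at_right 0. norm (poly (ph dx) c - h c) \<le> (C + Ls) * norm (dx ^ (Mdeg Mm Mp + 1))"
      using ev
    proof (rule eventually_mono)
      fix dx :: real assume dx: "0 < dx \<and> dx < min \<delta> 1"
      let ?S = "(\<Sum>s = Mdeg Mm Mp + 1..N. Lambda Mm Mp s * dx ^ s * (deriv ^^ s) h c)"
      have p1: "dx ^ (N+1) \<le> dx ^ (Mdeg Mm Mp + 1)"
        using dx MN by (intro power_decreasing) auto
      have "\<bar>?S\<bar> \<le> (\<Sum>s = Mdeg Mm Mp + 1..N. \<bar>Lambda Mm Mp s * dx ^ s * (deriv ^^ s) h c\<bar>)"
        by (rule sum_abs)
      also have "\<dots> \<le> (\<Sum>s = Mdeg Mm Mp + 1..N. \<bar>Lambda Mm Mp s * (deriv ^^ s) h c\<bar> * dx ^ (Mdeg Mm Mp + 1))"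
      proof (rule sum_mono)
        fix s assume s: "s \<in> {Mdeg Mm Mp + 1..N}"
        have "dx ^ s \<le> dx ^ (Mdeg Mm Mp + 1)" using dx s by (intro power_decreasing) auto
        moreover have "\<bar>Lambda Mm Mp s * dx ^ s * (deriv ^^ s) h c\<bar> = \<bar>Lambda Mm Mp s * (deriv ^^ s) h c\<bar> * dx ^ s"
          using dx by (simp add: abs_mult mult_ac)
        ultimately show "\<bar>Lambda Mm Mp s * dx ^ s * (deriv ^^ s) h c\<bar> \<le> \<bar>Lambda Mm Mp s * (deriv ^^ s) h c\<bar> * dx ^ (Mdeg Mm Mp + 1)"
          by (simp add: mult_left_mono)
      qed
      also have "\<dots> = Ls * dx ^ (Mdeg Mm Mp + 1)" unfolding Ls_def by (rule sum_distrib_right[symmetric])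
      finally have s1: "\<bar>?S\<bar> \<le> Ls * dx ^ (Mdeg Mm Mp + 1)" .
      have s2: "\<bar>poly (ph dx) c - h c - ?S\<bar> \<le> C * dx ^ (Mdeg Mm Mp + 1)"
        using est2[of dx] dx p1 C\<delta>(2) mult_left_mono[OF p1 C\<delta>(2)] by auto
      have "\<bar>poly (ph dx) c - h c\<bar> \<le> \<bar>poly (ph dx) c - h c - ?S\<bar> + \<bar>?S\<bar>" by linarith
      also have "\<dots> \<le> (C + Ls) * dx ^ (Mdeg Mm Mp + 1)" using s1 s2 by (simp add: distrib_right)
      finally show "norm (poly (ph dx) c - h c) \<le> (C + Ls) * norm (dx ^ (Mdeg Mm Mp + 1))"
        using dx by simp
    qed
  qed
  show ?thesis using part1 part2 part3 by blast
qed

end
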